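(* Let $X$ be a digraph and $S\subset V(X)$ such that no arc with exactly one end in $S$ lies in a digon. Then $X$ and the local reversal of $X$ at $S$ have the same $H$-spectrum.
   Context: A digraph $X$ has a finite vertex set and an arc set of ordered pairs of distinct vertices; $\{x,y\}$ is a digon if both $xy,yx$ are arcs. $H(X)$ has $(u,v)$-entry $1$ if $uv$ and $vu$ are arcs, $i$ if only $uv$ is an arc, $-i$ if only $vu$ is an arc, and $0$ otherwise; two digraphs have the same $H$-spectrum if their Hermitian adjacency matrices have the same characteristic polynomial. The local reversal of $X$ at $S$ is the digraph obtained by replacing every arc $xy$ with exactly one end in $S$ by its converse $yx$ (arcs with both or no ends in $S$ are unchanged). *)

theory Defs
  imports "Jordan_Normal_Form.Char_Poly"
begin

text \<open>A digraph with vertex set {0..<n} (every finite digraph is isomorphic to one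
  of these) and arc set A: ordered pairs of distinct vertices.\<close>

definition digraph :: "nat \<Rightarrow> (nat \<times> nat) set \<Rightarrow> bool" where
  "digraph n A \<longleftrightarrow> A \<subseteq> {0..<n} \<times> {0..<n} \<and> (\<forall>x. (x, x) \<notin> A)"

definition herm_adj :: "nat \<Rightarrow> (nat \<times> nat) set \<Rightarrow> complex mat" where
  "herm_adj n A = mat n n (\<lambda>(u, v).
     if (u, v) \<in> A \<and> (v, u) \<in> A then 1
     else if (u, v) \<in> A then \<i>
     else if (v, u) \<in> A then - \<i>
     else 0)"

definition local_reversal :: "(nat \<times> nat) set \<Rightarrow> nat set \<Rightarrow> (nat \<times> nat) set" where
  "local_reversal A S =
     {(x, y). (x, y) \<in> A \<and> (x \<in> S \<longleftrightarrow> y \<in> S)} \<union>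
     {(y, x) | x y. (x, y) \<in> A \<and> \<not> (x \<in> S \<longleftrightarrow> y \<in> S)}"

end

theory Submission
  imports Defs
begin

definition sgnS :: "nat set \<Rightarrow> nat \<Rightarrow> complex" where
  "sgnS S i = (if i \<in> S then -1 else 1)"

definition Dm :: "nat \<Rightarrow> nat set \<Rightarrow> complex mat" where
  "Dm n S = mat n n (\<lambda>(i,j). if i = j then sgnS S i else 0)"

lemma Dm_left:
  assumes "B \<in> carrier_mat n n" "i < n" "j < n"
  shows "(Dm n S * B) $$ (i,j) = sgnS S i * B $$ (i,j)"
proof -
  have "(Dm n S * B) $$ (i,j) = (\<Sum>k\<in>{0..<n}. (if i = k then sgnS S i else 0) * B $$ (k,j))"
    using assms by (simp add: Dm_def scalar_prod_def)
  also have "\<dots> = (\<Sum>k\<in>{0..<n}. if k = i then sgnS S i * B $$ (i,j) else 0)"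
    by (intro sum.cong) auto
  also have "\<dots> = sgnS S i * B $$ (i,j)"
    using assms by (simp add: sum.delta)
  finally show ?thesis .
qed

lemma Dm_right:
  assumes "B \<in> carrier_mat n n" "i < n" "j < n"
  shows "(B * Dm n S) $$ (i,j) = B $$ (i,j) * sgnS S j"
proof -
  have "(B * Dm n S) $$ (i,j) = (\<Sum>k\<in>{0..<n}. B $$ (i,k) * (if k = j then sgnS S j else 0))"
    using assms by (simp add: Dm_def scalar_prod_def) (intro sum.cong, auto)
  also have "\<dots> = (\<Sum>k\<in>{0..<n}. if k = j then B $$ (i,j) * sgnS S j else 0)"
    by (intro sum.cong) auto
  also have "\<dots> = B $$ (i,j) * sgnS S j"
    using assms by (simp add: sum.delta)
  finally show ?thesis .
qed

lemma sgnS_sq: "sgnS S i * sgnS S i = 1"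
  by (simp add: sgnS_def)

lemma Dm_inv: "Dm n S * Dm n S = 1\<^sub>m n"
proof (rule eq_matI)
  fix i j assume ij: "i < dim_row (1\<^sub>m n :: complex mat)" "j < dim_col (1\<^sub>m n :: complex mat)"
  have c: "Dm n S \<in> carrier_mat n n" by (simp add: Dm_def)
  show "(Dm n S * Dm n S) $$ (i, j) = 1\<^sub>m n $$ (i, j)"
    using ij Dm_left[OF c, of i j S] by (simp add: Dm_def sgnS_sq)
qed (auto simp: Dm_def)

lemma lr_same: "(i \<in> S \<longleftrightarrow> j \<in> S) \<Longrightarrow> (i,j) \<in> local_reversal A S \<longleftrightarrow> (i,j) \<in> A"
  unfolding local_reversal_def by blast

lemma lr_cross: "\<not>(i \<in> S \<longleftrightarrow> j \<in> S) \<Longrightarrow> (i,j) \<in> local_reversal A S \<longleftrightarrow> (j,i) \<in> A"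
  unfolding local_reversal_def by blast

lemma entry:
  assumes nd: "\<forall>x y. (x, y) \<in> A \<and> \<not> (x \<in> S \<longleftrightarrow> y \<in> S) \<longrightarrow> (y, x) \<notin> A"
    and i: "i < n" and j: "j < n"
  shows "sgnS S i * herm_adj n A $$ (i,j) * sgnS S j = herm_adj n (local_reversal A S) $$ (i,j)"
proof (cases "i \<in> S \<longleftrightarrow> j \<in> S")
  case True
  have "sgnS S i * sgnS S j = 1" using True by (auto simp: sgnS_def)
  moreover have "(i,j) \<in> local_reversal A S \<longleftrightarrow> (i,j) \<in> A" using lr_same[OF True] .
  moreover have "(j,i) \<in> local_reversal A S \<longleftrightarrow> (j,i) \<in> A" using lr_same True by blast
  ultimately show ?thesis using i j unfolding herm_adj_def
    by (simp add: algebra_simps)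
next
  case False
  have s: "sgnS S i * sgnS S j = -1" using False by (auto simp: sgnS_def)
  have a: "(i,j) \<in> local_reversal A S \<longleftrightarrow> (j,i) \<in> A" using lr_cross[OF False] .
  have b: "(j,i) \<in> local_reversal A S \<longleftrightarrow> (i,j) \<in> A" using lr_cross False by blast
  have c: "\<not> ((i,j) \<in> A \<and> (j,i) \<in> A)" using nd False by blast
  have "sgnS S i * herm_adj n A $$ (i,j) * sgnS S j = - herm_adj n A $$ (i,j)"
    using s by (metis mult.commute mult.left_commute mult_minus1)
  thus ?thesis using a b c i j unfolding herm_adj_def by auto
qed

theorem proposition8p2:
  fixes n :: nat and A :: "(nat \<times> nat) set" and S :: "nat set"
  assumes "digraph n A"
    and "S \<subseteq> {0..<n}"
    and "\<forall>x y. (x, y) \<in> A \<and> \<not> (x \<in> S \<longleftrightarrow> y \<in> S) \<longrightarrow> (y, x) \<notin> A"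
  shows "char_poly (herm_adj n (local_reversal A S)) = char_poly (herm_adj n A)"
proof (rule char_poly_similar, rule similar_matI)
  let ?D = "Dm n S"
  have cD: "?D \<in> carrier_mat n n" by (simp add: Dm_def)
  have cH: "herm_adj n A \<in> carrier_mat n n" by (simp add: herm_adj_def)
  show "{herm_adj n (local_reversal A S), herm_adj n A, ?D, ?D} \<subseteq> carrier_mat n n"
    by (simp add: herm_adj_def Dm_def)
  show "?D * ?D = 1\<^sub>m n" by (rule Dm_inv)
  show "?D * ?D = 1\<^sub>m n" by (rule Dm_inv)
  show "herm_adj n (local_reversal A S) = ?D * herm_adj n A * ?D"
  proof (rule eq_matI)
    fix i j assume ij: "i < dim_row (?D * herm_adj n A * ?D)" "j < dim_col (?D * herm_adj n A * ?D)"
    hence i: "i < n" and j: "j < n" by (auto simp: Dm_def)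
    have c2: "?D * herm_adj n A \<in> carrier_mat n n" using cD cH by simp
    have "(?D * herm_adj n A * ?D) $$ (i,j) = sgnS S i * herm_adj n A $$ (i,j) * sgnS S j"
      using Dm_right[OF c2 i j] Dm_left[OF cH i j] by simp
    also have "\<dots> = herm_adj n (local_reversal A S) $$ (i,j)"
      using entry[OF assms(3) i j] by simp
    finally show "herm_adj n (local_reversal A S) $$ (i, j) = (?D * herm_adj n A * ?D) $$ (i, j)" by simp
  qed (auto simp: herm_adj_def Dm_def)
qed

end
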